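(* Let $G$ be a $\sigma$-compact locally compact Abelian group and $\omega=\sum_{x\in\Gamma}\omega(x)\delta_x$ a translation bounded discrete measure on $G$. (i) If $\omega$ is norm-almost periodic, then $\omega$ is sup-almost periodic. (ii) If $\Gamma$ is weakly uniformly discrete, then $\omega$ is norm-almost periodic if and only if $\omega$ is sup-almost periodic.
   Context: Fix a compact $K\subset G$ with nonempty interior. For a translation bounded measure $\mu$, $\|\mu\|_K:=\sup_{t\in G}|\mu|(t+K)$, and $T_t\mu$ denotes the translate $T_t\mu(A)=\mu(A-t)$. $\omega$ is norm-almost periodic if for every $\varepsilon>0$ the set $P^K_\varepsilon(\omega):=\{t\in G:\|\omega-T_t\omega\|_K<\varepsilon\}$ is relatively dense. A discrete measure $\omega$ is sup-almost periodic if for every $\varepsilon>0$ the set $P^\infty_\varepsilon(\omega):=\{t\in G:\sup_{x\in G}|\omega(\{t+x\})-\omega(\{x\})|<\varepsilon\}$ is relatively dense. A set $\Gamma$ is weakly uniformly discrete if $\sup_{x\in G}\#(\Gamma\cap(x+K))<\infty$ for every compact $K$. Relatively dense: $A+K'=G$ for some compact $K'$. *)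

theory Defs
  imports "HOL-Analysis.Analysis"
begin

text \<open>A discrete measure on G is represented by its weight function
  w :: 'a => complex, i.e. omega = sum over x of w x times delta_x.\<close>

definition sigma_compact_group :: "'a::topological_space itself \<Rightarrow> bool" where
  "sigma_compact_group _ \<longleftrightarrow>
     (\<exists>F :: 'a set set. countable F \<and> (\<forall>C\<in>F. compact C) \<and> \<Union>F = UNIV)"

definition tvar :: "('a \<Rightarrow> complex) \<Rightarrow> 'a set \<Rightarrow> ennreal" where
  "tvar w A = (\<integral>\<^sup>+ x. ennreal (norm (w x)) \<partial>count_space A)"

definition Knorm :: "'a::ab_group_add set \<Rightarrow> ('a \<Rightarrow> complex) \<Rightarrow> ennreal" where
  "Knorm K w = (SUP t. tvar w ((\<lambda>k. t + k) ` K))"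

definition translation_bounded :: "('a::{ab_group_add,topological_space} \<Rightarrow> complex) \<Rightarrow> bool" where
  "translation_bounded w \<longleftrightarrow> (\<forall>K. compact K \<longrightarrow> Knorm K w < \<infinity>)"

text \<open>Weights of the translate T_t omega, where T_t mu (A) = mu (A - t).\<close>
definition transl :: "'a::ab_group_add \<Rightarrow> ('a \<Rightarrow> complex) \<Rightarrow> ('a \<Rightarrow> complex)" where
  "transl t w = (\<lambda>y. w (y - t))"

definition rel_dense :: "'a::{ab_group_add,topological_space} set \<Rightarrow> bool" where
  "rel_dense A \<longleftrightarrow> (\<exists>K'. compact K' \<and> {a + k | a k. a \<in> A \<and> k \<in> K'} = UNIV)"

definition PK :: "'a::ab_group_add set \<Rightarrow> real \<Rightarrow> ('a \<Rightarrow> complex) \<Rightarrow> 'a set" where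
  "PK K \<epsilon> w = {t. Knorm K (\<lambda>y. w y - transl t w y) < ennreal \<epsilon>}"

definition norm_almost_periodic :: "'a::{ab_group_add,topological_space} set \<Rightarrow> ('a \<Rightarrow> complex) \<Rightarrow> bool" where
  "norm_almost_periodic K w \<longleftrightarrow> (\<forall>\<epsilon>>0. rel_dense (PK K \<epsilon> w))"

definition Pinf :: "real \<Rightarrow> ('a::ab_group_add \<Rightarrow> complex) \<Rightarrow> 'a set" where
  "Pinf \<epsilon> w = {t. (SUP x. ennreal (norm (w (t + x) - w x))) < ennreal \<epsilon>}"

definition sup_almost_periodic :: "('a::{ab_group_add,topological_space} \<Rightarrow> complex) \<Rightarrow> bool" where
  "sup_almost_periodic w \<longleftrightarrow> (\<forall>\<epsilon>>0. rel_dense (Pinf \<epsilon> w))"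

definition weakly_uniformly_discrete :: "'a::{ab_group_add,topological_space} set \<Rightarrow> bool" where
  "weakly_uniformly_discrete \<Gamma> \<longleftrightarrow>
     (\<forall>K. compact K \<longrightarrow> (\<exists>N::nat. \<forall>x. finite (\<Gamma> \<inter> (\<lambda>k. x + k) ` K)
                                         \<and> card (\<Gamma> \<inter> (\<lambda>k. x + k) ` K) \<le> N))"

end

theory Submission
  imports Defs
begin

lemma point_le_tvar:
  assumes "y \<in> A"
  shows "ennreal (norm (w y)) \<le> tvar w A"
proof -
  have "ennreal (norm (w y)) = (\<integral>\<^sup>+x. ennreal (norm (w x)) \<partial>count_space {y})"
    by (simp add: nn_integral_count_space_finite)
  also have "\<dots> = (\<integral>\<^sup>+x. ennreal (norm (w x)) * indicator {y} x \<partial>count_space UNIV)"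
    by (rule nn_integral_count_space_indicator) simp
  also have "\<dots> \<le> (\<integral>\<^sup>+x. ennreal (norm (w x)) * indicator A x \<partial>count_space UNIV)"
    using assms by (intro nn_integral_mono) (auto split: split_indicator)
  also have "\<dots> = tvar w A"
    unfolding tvar_def
    by (cases "A = UNIV") (simp_all add: nn_integral_count_space_indicator)
  finally show ?thesis .
qed

lemma tvar_finite_bound:
  assumes "finite B" "\<And>x. x \<in> A - B \<Longrightarrow> w x = 0" "\<And>x. x \<in> A \<Longrightarrow> ennreal (norm (w x)) \<le> S"
  shows "tvar w A \<le> of_nat (card (A \<inter> B)) * S"
proof -
  have "tvar w A = (\<integral>\<^sup>+x. ennreal (norm (w x)) \<partial>count_space (A \<inter> B))"
    unfolding tvar_def using assms(2) by (intro nn_integral_count_space_eq) auto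
  also have "\<dots> = (\<Sum>x\<in>A \<inter> B. ennreal (norm (w x)))"
    using assms(1) by (simp add: nn_integral_count_space_finite)
  also have "\<dots> \<le> (\<Sum>x\<in>A \<inter> B. S)"
    using assms(3) by (intro sum_mono) auto
  also have "\<dots> = of_nat (card (A \<inter> B)) * S" by simp
  finally show ?thesis .
qed

lemma rel_dense_mono:
  assumes AB: "A \<subseteq> B" and r: "rel_dense A"
  shows "rel_dense B"
proof -
  obtain K' where K': "compact K'" "{a + k | a k. a \<in> A \<and> k \<in> K'} = UNIV"
    using r unfolding rel_dense_def by blast
  have "{a + k | a k. a \<in> B \<and> k \<in> K'} = UNIV"
  proof (rule set_eqI, rule iffI)
    fix z assume "z \<in> (UNIV :: 'a set)"
    hence "z \<in> {a + k | a k. a \<in> A \<and> k \<in> K'}" using K'(2) by simp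
    then obtain a k where "z = a + k" "a \<in> A" "k \<in> K'" by blast
    thus "z \<in> {a + k | a k. a \<in> B \<and> k \<in> K'}" using AB by blast
  qed simp
  thus ?thesis using K'(1) unfolding rel_dense_def by blast
qed

lemma PK_sub_Pinf:
  fixes K :: "'a::ab_group_add set"
  assumes "K \<noteq> {}"
  shows "PK K e w \<subseteq> Pinf e w"
proof
  fix t assume t: "t \<in> PK K e w"
  obtain k0 where k0: "k0 \<in> K" using assms by blast
  have "(SUP x. ennreal (norm (w (t + x) - w x))) \<le> Knorm K (\<lambda>y. w y - transl t w y)"
  proof (rule SUP_least)
    fix x
    have "ennreal (norm (w (t + x) - w x)) = ennreal (norm ((\<lambda>y. w y - transl t w y) (t + x)))"
      by (simp add: transl_def)
    also have "\<dots> \<le> tvar (\<lambda>y. w y - transl t w y) ((\<lambda>k. (t + x - k0) + k) ` K)"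
    proof (rule point_le_tvar[where w="\<lambda>y. w y - transl t w y"])
      show "t + x \<in> (\<lambda>k. (t + x - k0) + k) ` K"
        by (rule image_eqI[where x=k0]) (simp_all add: k0)
    qed
    also have "\<dots> \<le> Knorm K (\<lambda>y. w y - transl t w y)"
      unfolding Knorm_def by (rule SUP_upper) simp
    finally show "ennreal (norm (w (t + x) - w x)) \<le> Knorm K (\<lambda>y. w y - transl t w y)" .
  qed
  also have "\<dots> < ennreal e" using t unfolding PK_def by simp
  finally have "(SUP x. ennreal (norm (w (t + x) - w x))) < ennreal e" .
  thus "t \<in> Pinf e w" unfolding Pinf_def by simp
qed

lemma Pinf_sub_PK:
  fixes K :: "'a::ab_group_add set" and N :: nat
  assumes N: "\<And>x. finite (\<Gamma> \<inter> (\<lambda>k. x + k) ` K) \<and> card (\<Gamma> \<inter> (\<lambda>k. x + k) ` K) \<le> N"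
    and supp: "\<forall>x. x \<notin> \<Gamma> \<longrightarrow> w x = 0"
    and e: "e > 0"
  shows "Pinf (e / (2 * (real N + 1))) w \<subseteq> PK K e w"
proof
  fix t assume t: "t \<in> Pinf (e / (2 * (real N + 1))) w"
  define S where "S = (SUP x. ennreal (norm (w (t + x) - w x)))"
  define d where "d = e / (2 * (real N + 1))"
  have S: "S < ennreal d" using t by (simp add: Pinf_def S_def d_def)
  have dpos: "d > 0" using e by (simp add: d_def)
  define v where "v = (\<lambda>y. w y - transl t w y)"
  have bnd: "tvar v ((\<lambda>k. s + k) ` K) \<le> of_nat (2 * N) * S" for s
  proof -
    let ?A = "(\<lambda>k. s + k) ` K"
    let ?B = "(\<Gamma> \<inter> ?A) \<union> ((\<lambda>g. g + t) ` (\<Gamma> \<inter> (\<lambda>k. (s - t) + k) ` K))"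
    have fin: "finite ?B" using N by auto
    have "tvar v ?A \<le> of_nat (card (?A \<inter> ?B)) * S"
    proof (rule tvar_finite_bound[OF fin])
      fix x assume x: "x \<in> ?A - ?B"
      then obtain k where k: "k \<in> K" "x = s + k" by auto
      have "x \<notin> \<Gamma>" using x by auto
      moreover have "x - t \<notin> \<Gamma>"
      proof
        assume "x - t \<in> \<Gamma>"
        hence "x - t \<in> \<Gamma> \<inter> (\<lambda>k. (s - t) + k) ` K" using k by (auto intro!: image_eqI[of _ _ k] simp: algebra_simps)
        moreover have "x = (x - t) + t" by simp
        ultimately have "x \<in> ?B" by blast
        thus False using x by auto
      qed
      ultimately show "v x = 0" using supp by (simp add: v_def transl_def)
    next
      fix x
      have "ennreal (norm (v x)) = ennreal (norm (w (t + (x - t)) - w (x - t)))"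
        by (simp add: v_def transl_def)
      also have "\<dots> \<le> S" unfolding S_def by (rule SUP_upper) simp
      finally show "ennreal (norm (v x)) \<le> S" .
    qed
    also have "card (?A \<inter> ?B) \<le> 2 * N"
    proof -
      have "card (?A \<inter> ?B) \<le> card ?B" using fin by (intro card_mono) auto
      also have "\<dots> \<le> card (\<Gamma> \<inter> ?A) + card ((\<lambda>g. g + t) ` (\<Gamma> \<inter> (\<lambda>k. (s - t) + k) ` K))"
        by (rule card_Un_le)
      also have "\<dots> \<le> card (\<Gamma> \<inter> ?A) + card (\<Gamma> \<inter> (\<lambda>k. (s - t) + k) ` K)"
        by (intro add_left_mono card_image_le) (use N in auto)
      also have "\<dots> \<le> N + N" using N[of s] N[of "s - t"] by linarith
      finally show ?thesis by simp
    qed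
    hence "of_nat (card (?A \<inter> ?B)) * S \<le> of_nat (2 * N) * S"
      by (rule mult_right_mono[OF of_nat_mono]) simp_all
    finally show ?thesis .
  qed
  have "Knorm K v \<le> of_nat (2 * N) * S"
    unfolding Knorm_def by (rule SUP_least) (rule bnd)
  also have "\<dots> \<le> ennreal (2 * real N) * S"
    by (simp add: ennreal_of_nat_eq_real_of_nat)
  also have "\<dots> < ennreal (2 * (real N + 1)) * ennreal d"
  proof -
    have "ennreal (2 * real N) * S \<le> ennreal (2 * real N) * ennreal d"
      using S by (intro mult_left_mono) auto
    also have "\<dots> = ennreal (2 * real N * d)"
      using dpos by (simp add: ennreal_mult)
    also have "\<dots> < ennreal (2 * (real N + 1) * d)"
      using dpos by (intro ennreal_lessI) (simp_all add: mult_pos_pos)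
    also have "\<dots> = ennreal (2 * (real N + 1)) * ennreal d"
      using dpos by (simp add: ennreal_mult)
    finally show ?thesis .
  qed
  also have "\<dots> = ennreal e"
  proof -
    have "2 * (real N + 1) * d = e" by (simp add: d_def)
    have "ennreal (2 * (real N + 1)) * ennreal d = ennreal (2 * (real N + 1) * d)"
      by (intro ennreal_mult[symmetric]) (use dpos in auto)
    with \<open>2 * (real N + 1) * d = e\<close> show ?thesis by simp
  qed
  finally show "t \<in> PK K e w" by (simp add: PK_def v_def)
qed

theorem lemma3p4:
  fixes K :: "'a::{topological_ab_group_add, t2_space} set"
    and w :: "'a \<Rightarrow> complex" and \<Gamma> :: "'a set"
  assumes lc: "locally_compact_space (euclidean :: 'a topology)"
    and sc: "sigma_compact_group TYPE('a)"
    and K: "compact K" "interior K \<noteq> {}"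
    and supp: "\<forall>x. x \<notin> \<Gamma> \<longrightarrow> w x = 0"
    and tb: "translation_bounded w"
  shows "(norm_almost_periodic K w \<longrightarrow> sup_almost_periodic w)
       \<and> (weakly_uniformly_discrete \<Gamma> \<longrightarrow>
            (norm_almost_periodic K w \<longleftrightarrow> sup_almost_periodic w))"
proof -
  have Kne: "K \<noteq> {}" using K(2) by auto
  have i: "norm_almost_periodic K w \<longrightarrow> sup_almost_periodic w"
  proof
    assume nap: "norm_almost_periodic K w"
    show "sup_almost_periodic w"
      unfolding sup_almost_periodic_def
    proof (intro allI impI)
      fix e :: real assume e: "e > 0"
      have "rel_dense (PK K e w)" using nap e unfolding norm_almost_periodic_def by simp
      thus "rel_dense (Pinf e w)" by (rule rel_dense_mono[OF PK_sub_Pinf[OF Kne]])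
    qed
  qed
  have ii: "sup_almost_periodic w \<longrightarrow> norm_almost_periodic K w"
    if wud: "weakly_uniformly_discrete \<Gamma>"
  proof
    assume sap: "sup_almost_periodic w"
    have "\<exists>N::nat. \<forall>x. finite (\<Gamma> \<inter> (\<lambda>k. x + k) ` K) \<and> card (\<Gamma> \<inter> (\<lambda>k. x + k) ` K) \<le> N"
      using wud K(1) unfolding weakly_uniformly_discrete_def by simp
    then obtain N :: nat where N: "\<And>x. finite (\<Gamma> \<inter> (\<lambda>k. x + k) ` K) \<and> card (\<Gamma> \<inter> (\<lambda>k. x + k) ` K) \<le> N"
      by blast
    show "norm_almost_periodic K w"
      unfolding norm_almost_periodic_def
    proof (intro allI impI)
      fix e :: real assume e: "e > 0"
      have pos: "e / (2 * (real N + 1)) > 0" using e by simp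
      have "rel_dense (Pinf (e / (2 * (real N + 1))) w)"
        using sap pos unfolding sup_almost_periodic_def by blast
      thus "rel_dense (PK K e w)" by (rule rel_dense_mono[OF Pinf_sub_PK[OF N supp e]])
    qed
  qed
  show ?thesis using i ii by blast
qed

end
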